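(* Let $(\Omega,\mu)$ be a measure space and let $Y$ be a uniformly monotone Banach function space on $(\Omega,\mu)$, with $\delta$ a function witnessing uniform monotonicity of $Y$. Let $0<\varepsilon<1$. Assume that $f_1$ and $f_2$ are positive elements of $Y$ such that $$\Vert f_1+f_2\Vert\le 1 \quad\text{and}\quad \frac{1}{1+\delta(\varepsilon/3)}\le \Vert f_1-f_2\Vert.$$ Then there are two positive functions $h_1,h_2\in Y$ with disjoint supports such that $\Vert h_1+h_2\Vert=1$ and $\Vert h_i-f_i\Vert<\varepsilon$ for $i=1,2$.
   Context: Let $L^0(\mu)$ denote the space of ($\mu$-a.e. equivalence classes of) real valued measurable functions on $\Omega$. A Banach space $X$ is a Banach function space on $(\Omega,\mu)$ if $X$ is an ideal in $L^0(\mu)$ and whenever $x,y\in X$ with $|x|\le|y|$ a.e., then $\Vert x\Vert\le\Vert y\Vert$. A Banach lattice $E$ is uniformly monotone if for every $\varepsilon>0$ there is $\delta(\varepsilon)>0$ such that whenever $x\in E$ with $\Vert x\Vert=1$, $y\in E$, $x,y\ge 0$, the condition $\Vert x+y\Vert\le 1+\delta(\varepsilon)$ implies $\Vert y\Vert\le\varepsilon$; such a function $\delta$ is said to witness (be a modulus of) uniform monotonicity. All spaces are real. *)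

theory Defs
  imports "HOL-Analysis.Analysis"
begin

text \<open>A Banach function space on the measure space M is represented by a set X of
real-valued measurable functions (representatives of a.e.-classes) together with a
function N giving the norm. Elements that agree a.e. are identified through the
norm: the norm N is a seminorm on representatives that vanishes exactly on
functions that are 0 a.e.; the lattice monotonicity of the norm forces N to be
invariant under a.e. equality.\<close>

definition banach_function_space ::
  "'a measure \<Rightarrow> ('a \<Rightarrow> real) set \<Rightarrow> (('a \<Rightarrow> real) \<Rightarrow> real) \<Rightarrow> bool" where
  "banach_function_space M X N \<longleftrightarrow>
     X \<subseteq> borel_measurable M
   \<and> (\<lambda>x. 0) \<in> X
   \<and> (\<forall>f\<in>X. \<forall>g\<in>X. (\<lambda>x. f x + g x) \<in> X)
   \<and> (\<forall>f\<in>X. \<forall>c::real. (\<lambda>x. c * f x) \<in> X)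
   \<and> (\<forall>f\<in>X. \<forall>g\<in>X. N (\<lambda>x. f x + g x) \<le> N f + N g)
   \<and> (\<forall>f\<in>X. \<forall>c::real. N (\<lambda>x. c * f x) = \<bar>c\<bar> * N f)
   \<and> (\<forall>f\<in>X. N f = 0 \<longleftrightarrow> (AE x in M. f x = 0))
   \<and> (\<forall>s. (\<forall>n. s n \<in> X) \<and>
          (\<forall>e>0. \<exists>n0. \<forall>m\<ge>n0. \<forall>n\<ge>n0. N (\<lambda>x. s m x - s n x) < e)
        \<longrightarrow> (\<exists>f\<in>X. (\<lambda>n. N (\<lambda>x. s n x - f x)) \<longlonglongrightarrow> 0))
   \<and> (\<forall>f\<in>borel_measurable M. \<forall>g\<in>X. (AE x in M. \<bar>f x\<bar> \<le> \<bar>g x\<bar>) \<longrightarrow> f \<in> X)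
   \<and> (\<forall>f\<in>X. \<forall>g\<in>X. (AE x in M. \<bar>f x\<bar> \<le> \<bar>g x\<bar>) \<longrightarrow> N f \<le> N g)"

definition uniformly_monotone_modulus ::
  "'a measure \<Rightarrow> ('a \<Rightarrow> real) set \<Rightarrow> (('a \<Rightarrow> real) \<Rightarrow> real) \<Rightarrow> (real \<Rightarrow> real) \<Rightarrow> bool" where
  "uniformly_monotone_modulus M X N \<delta> \<longleftrightarrow>
     (\<forall>\<epsilon>>0. \<delta> \<epsilon> > 0 \<and>
        (\<forall>x\<in>X. \<forall>y\<in>X. (AE t in M. x t \<ge> 0) \<and> (AE t in M. y t \<ge> 0) \<and> N x = 1
            \<and> N (\<lambda>t. x t + y t) \<le> 1 + \<delta> \<epsilon> \<longrightarrow> N y \<le> \<epsilon>))"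

end

theory Submission
  imports Defs
begin

theorem lemma2p4:
  fixes M :: "'a measure" and Y :: "('a \<Rightarrow> real) set"
    and N :: "('a \<Rightarrow> real) \<Rightarrow> real" and \<delta> :: "real \<Rightarrow> real"
    and \<epsilon> :: real and f1 f2 :: "'a \<Rightarrow> real"
  assumes "banach_function_space M Y N"
    and "uniformly_monotone_modulus M Y N \<delta>"
    and "0 < \<epsilon>" and "\<epsilon> < 1"
    and "f1 \<in> Y" and "f2 \<in> Y"
    and "AE x in M. f1 x \<ge> 0" and "AE x in M. f2 x \<ge> 0"
    and "N (\<lambda>x. f1 x + f2 x) \<le> 1"
    and "1 / (1 + \<delta> (\<epsilon> / 3)) \<le> N (\<lambda>x. f1 x - f2 x)"
  shows "\<exists>h1\<in>Y. \<exists>h2\<in>Y. (AE x in M. h1 x \<ge> 0) \<and> (AE x in M. h2 x \<ge> 0)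
           \<and> (AE x in M. h1 x = 0 \<or> h2 x = 0)
           \<and> N (\<lambda>x. h1 x + h2 x) = 1
           \<and> N (\<lambda>x. h1 x - f1 x) < \<epsilon> \<and> N (\<lambda>x. h2 x - f2 x) < \<epsilon>"
proof -
  note B = assms(1)[unfolded banach_function_space_def]
  have meas: "\<And>f. f \<in> Y \<Longrightarrow> f \<in> borel_measurable M" using B[THEN conjunct1] by blast
  have add: "\<And>f g. f \<in> Y \<Longrightarrow> g \<in> Y \<Longrightarrow> (\<lambda>x. f x + g x) \<in> Y" using B[THEN conjunct2, THEN conjunct2, THEN conjunct1] by blast
  have smul: "\<And>f c. f \<in> Y \<Longrightarrow> (\<lambda>x. c * f x) \<in> Y" using B[THEN conjunct2, THEN conjunct2, THEN conjunct2, THEN conjunct1] by blast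
  have tri: "\<And>f g. f \<in> Y \<Longrightarrow> g \<in> Y \<Longrightarrow> N (\<lambda>x. f x + g x) \<le> N f + N g" using B[THEN conjunct2, THEN conjunct2, THEN conjunct2, THEN conjunct2, THEN conjunct1] by blast
  have hom: "\<And>f c. f \<in> Y \<Longrightarrow> N (\<lambda>x. c * f x) = \<bar>c\<bar> * N f" using B[THEN conjunct2, THEN conjunct2, THEN conjunct2, THEN conjunct2, THEN conjunct2, THEN conjunct1] by blast
  have dom: "\<And>f g. f \<in> borel_measurable M \<Longrightarrow> g \<in> Y \<Longrightarrow> (AE x in M. \<bar>f x\<bar> \<le> \<bar>g x\<bar>) \<Longrightarrow> f \<in> Y"
    using B[THEN conjunct2, THEN conjunct2, THEN conjunct2, THEN conjunct2, THEN conjunct2, THEN conjunct2, THEN conjunct2, THEN conjunct2, THEN conjunct1] by blast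
  have mono: "\<And>f g. f \<in> Y \<Longrightarrow> g \<in> Y \<Longrightarrow> (AE x in M. \<bar>f x\<bar> \<le> \<bar>g x\<bar>) \<Longrightarrow> N f \<le> N g"
    using B[THEN conjunct2, THEN conjunct2, THEN conjunct2, THEN conjunct2, THEN conjunct2, THEN conjunct2, THEN conjunct2, THEN conjunct2, THEN conjunct2] by blast
  have domp: "\<And>f g. f \<in> borel_measurable M \<Longrightarrow> g \<in> Y \<Longrightarrow> (\<And>x. \<bar>f x\<bar> \<le> \<bar>g x\<bar>) \<Longrightarrow> f \<in> Y"
    using dom by auto
  have monop: "\<And>f g. f \<in> Y \<Longrightarrow> g \<in> Y \<Longrightarrow> (\<And>x. \<bar>f x\<bar> \<le> \<bar>g x\<bar>) \<Longrightarrow> N f \<le> N g"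
    using mono by auto
  note U = assms(2)[unfolded uniformly_monotone_modulus_def]
  define d where "d = \<delta> (\<epsilon> / 3)"
  have dpos: "d > 0" using U assms(3) d_def by auto
  have Um: "\<And>x y. x \<in> Y \<Longrightarrow> y \<in> Y \<Longrightarrow> (AE t in M. x t \<ge> 0) \<Longrightarrow> (AE t in M. y t \<ge> 0)
     \<Longrightarrow> N x = 1 \<Longrightarrow> N (\<lambda>t. x t + y t) \<le> 1 + d \<Longrightarrow> N y \<le> \<epsilon> / 3"
    using U assms(3) d_def by (meson divide_pos_pos zero_less_numeral)
  have m1: "f1 \<in> borel_measurable M" "f2 \<in> borel_measurable M" using meas assms(5,6) by auto
  have s12: "(\<lambda>x. f1 x + f2 x) \<in> Y" using add assms(5,6) by auto
  have af1: "(\<lambda>x. \<bar>f1 x\<bar>) \<in> Y" by (rule domp[OF _ assms(5)]) (use m1 in auto)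
  have af2: "(\<lambda>x. \<bar>f2 x\<bar>) \<in> Y" by (rule domp[OF _ assms(6)]) (use m1 in auto)
  have aa: "(\<lambda>x. \<bar>f1 x\<bar> + \<bar>f2 x\<bar>) \<in> Y" using add af1 af2 by auto
  define g where "g = (\<lambda>x. \<bar>f1 x - f2 x\<bar>)"
  have gm: "g \<in> borel_measurable M" unfolding g_def using m1 by measurable
  have gY: "g \<in> Y" by (rule domp[OF gm aa]) (auto simp: g_def)
  have dY: "(\<lambda>x. f1 x - f2 x) \<in> Y" by (rule domp[OF _ aa]) (use m1 in auto)
  define a where "a = N g"
  have aeq: "a = N (\<lambda>x. f1 x - f2 x)" unfolding a_def
    using monop[OF gY dY] monop[OF dY gY] by (auto simp: g_def)
  have apos: "a \<ge> 1 / (1 + d)" using aeq assms(10) d_def by simp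
  have a0: "a > 0" using apos dpos by (smt (verit) divide_pos_pos)
  have ale1: "a \<le> 1"
  proof -
    have "AE x in M. \<bar>g x\<bar> \<le> \<bar>f1 x + f2 x\<bar>" using assms(7,8) by eventually_elim (auto simp: g_def)
    then have "a \<le> N (\<lambda>x. f1 x + f2 x)" unfolding a_def by (rule mono[OF gY s12])
    then show ?thesis using assms(9) by simp
  qed
  define x where "x = (\<lambda>t. (1 / a) * g t)"
  have xY: "x \<in> Y" unfolding x_def using smul gY by blast
  have Nx0: "N x = \<bar>1/a\<bar> * N g" unfolding x_def by (rule hom[OF gY])
  have Nx: "N x = 1" using Nx0 a0 a_def by simp
  have xpos: "AE t in M. x t \<ge> 0" using a0 by (auto simp: x_def g_def)
  have dle: "d \<le> \<epsilon> / 3"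
  proof -
    have yY: "(\<lambda>t. d * x t) \<in> Y" using smul xY by blast
    have "N (\<lambda>t. d * x t) \<le> \<epsilon> / 3"
    proof (rule Um[OF xY yY xpos])
      show "AE t in M. 0 \<le> d * x t" using xpos by eventually_elim (use dpos in simp)
      show "N x = 1" by (rule Nx)
      have "(\<lambda>t. x t + d * x t) = (\<lambda>t. (1 + d) * x t)" by (auto simp: algebra_simps)
      then show "N (\<lambda>t. x t + d * x t) \<le> 1 + d" using hom[OF xY, of "1+d"] Nx dpos by simp
    qed
    then show ?thesis using hom[OF xY, of d] Nx dpos by simp
  qed
  have one_a: "1 - a \<le> \<epsilon> / 3"
  proof -
    have "1 - a \<le> 1 - 1 / (1 + d)" using apos by simp
    also have "\<dots> = d / (1 + d)" using dpos by (simp add: field_simps)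
    also have "\<dots> \<le> d" using dpos by (simp add: field_simps)
    finally show ?thesis using dle by simp
  qed
  define m where "m = (\<lambda>t. min (f1 t) (f2 t))"
  have mm: "m \<in> borel_measurable M" unfolding m_def using m1 by measurable
  have mY: "m \<in> Y" by (rule domp[OF mm aa]) (auto simp: m_def)
  define y where "y = (\<lambda>t. (2 / a) * m t)"
  have yY: "y \<in> Y" unfolding y_def using smul mY by blast
  have ypos: "AE t in M. y t \<ge> 0" using assms(7,8) by eventually_elim (use a0 in \<open>auto simp: y_def m_def\<close>)
  have xy: "(\<lambda>t. x t + y t) = (\<lambda>t. (1 / a) * (f1 t + f2 t))"
    by (rule ext) (use a0 in \<open>auto simp: x_def y_def g_def m_def field_simps min_def abs_if\<close>)
  have "N (\<lambda>t. x t + y t) \<le> 1 + d"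
  proof -
    have "N (\<lambda>t. x t + y t) = (1 / a) * N (\<lambda>t. f1 t + f2 t)" unfolding xy
      using hom[OF s12, of "1/a"] a0 by simp
    also have "\<dots> \<le> 1 / a" using assms(9) a0 by (simp add: divide_right_mono)
    also have "\<dots> \<le> 1 + d" using apos a0 dpos by (simp add: field_simps)
    finally show ?thesis .
  qed
  then have Ny: "N y \<le> \<epsilon> / 3" using Um[OF xY yY xpos ypos Nx] by simp
  have Nyge: "N y \<ge> 0"
  proof -
    have z: "(\<lambda>t. 0 * y t) = (\<lambda>t. 0)" by simp
    have "N (\<lambda>t. 0 * y t) = 0" using hom[OF yY, of 0] by simp
    moreover have "N (\<lambda>t. 0 * y t) \<le> N y" by (rule monop[OF smul[OF yY] yY]) simp
    ultimately show ?thesis by simp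
  qed
  have Nm: "N m \<le> \<epsilon> / 6"
  proof -
    have "N y = (2 / a) * N m" unfolding y_def using hom[OF mY, of "2/a"] a0 by simp
    then have "N m = (a / 2) * N y" using a0 by (simp add: field_simps)
    also have "\<dots> \<le> (1/2) * N y" using ale1 Nyge a0 by (intro mult_right_mono) auto
    also have "\<dots> \<le> \<epsilon> / 6" using Ny by simp
    finally show ?thesis .
  qed
  have key: "\<And>u f. u \<in> Y \<Longrightarrow> f \<in> Y \<Longrightarrow> (\<And>t. f t = u t + m t) \<Longrightarrow> N u \<le> a
      \<Longrightarrow> N (\<lambda>t. (1 / a) * u t - f t) < \<epsilon>"
  proof -
    fix u f assume uY: "u \<in> Y" and fY: "f \<in> Y" and fe: "\<And>t. f t = u t + m t" and Nu: "N u \<le> a"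
    have e: "(\<lambda>t. (1 / a) * u t - f t) = (\<lambda>t. (\<lambda>t. (1 / a - 1) * u t) t + (\<lambda>t. (-1) * m t) t)"
      using fe by (auto simp: algebra_simps)
    have c0: "1 / a - 1 \<ge> 0" using a0 ale1 by (simp add: field_simps)
    have "N (\<lambda>t. (1 / a) * u t - f t) \<le> N (\<lambda>t. (1 / a - 1) * u t) + N (\<lambda>t. (-1) * m t)"
      unfolding e by (rule tri[OF smul[OF uY] smul[OF mY]])
    also have "\<dots> = (1 / a - 1) * N u + N m" using hom[OF uY, of "1/a - 1"] hom[OF mY, of "-1"] c0 by simp
    also have "\<dots> \<le> (1 / a - 1) * a + N m" using Nu c0 by (simp add: mult_left_mono)
    also have "\<dots> = 1 - a + N m" using a0 by (simp add: field_simps)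
    also have "\<dots> < \<epsilon>" using one_a Nm assms(3) by simp
    finally show "N (\<lambda>t. (1 / a) * u t - f t) < \<epsilon>" .
  qed
  define u1 where "u1 = (\<lambda>t. max (f1 t - f2 t) 0)"
  define u2 where "u2 = (\<lambda>t. max (f2 t - f1 t) 0)"
  have u1m: "u1 \<in> borel_measurable M" unfolding u1_def using m1 by measurable
  have u2m: "u2 \<in> borel_measurable M" unfolding u2_def using m1 by measurable
  have u1Y: "u1 \<in> Y" by (rule domp[OF u1m gY]) (auto simp: u1_def g_def)
  have u2Y: "u2 \<in> Y" by (rule domp[OF u2m gY]) (auto simp: u2_def g_def)
  have Nu1: "N u1 \<le> a" unfolding a_def by (rule monop[OF u1Y gY]) (auto simp: u1_def g_def)
  have Nu2: "N u2 \<le> a" unfolding a_def by (rule monop[OF u2Y gY]) (auto simp: u2_def g_def)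
  define h1 where "h1 = (\<lambda>t. (1 / a) * u1 t)"
  define h2 where "h2 = (\<lambda>t. (1 / a) * u2 t)"
  have "h1 \<in> Y" "h2 \<in> Y" unfolding h1_def h2_def by (rule smul[OF u1Y], rule smul[OF u2Y])
  moreover have "AE t in M. h1 t \<ge> 0" "AE t in M. h2 t \<ge> 0"
    using a0 by (auto simp: h1_def h2_def u1_def u2_def)
  moreover have "AE t in M. h1 t = 0 \<or> h2 t = 0" by (auto simp: h1_def h2_def u1_def u2_def)
  moreover have "N (\<lambda>t. h1 t + h2 t) = 1"
  proof -
    have "(\<lambda>t. h1 t + h2 t) = x" by (rule ext) (use a0 in \<open>auto simp: h1_def h2_def u1_def u2_def x_def g_def field_simps max_def abs_if\<close>)
    then show ?thesis using Nx by simp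
  qed
  moreover have "N (\<lambda>t. h1 t - f1 t) < \<epsilon>" unfolding h1_def
    by (rule key[OF u1Y assms(5) _ Nu1]) (auto simp: u1_def m_def)
  moreover have "N (\<lambda>t. h2 t - f2 t) < \<epsilon>" unfolding h2_def
    by (rule key[OF u2Y assms(6) _ Nu2]) (auto simp: u2_def m_def)
  ultimately show ?thesis by blast
qed

end
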